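(* With $w_1=\alpha A+bC$, $u=\alpha B+bD$, $w_2=\delta D+cB$, $v=cA+\delta C$ (the entries of $\Omega=\mathsf dT\,T^{-1}$, where $T^{-1}=\begin{pmatrix}A&B\\C&D\end{pmatrix}$), the following hold in $\Gamma$: $w_1u=uw_1-2hu^2$, $w_2u=uw_2$, $w_1v=vw_1+2h(w_1w_2-uv)$, $w_2v=vw_2$, $w_1w_2=-w_2w_1-2huw_2$, $w_1^2=-2huw_1$, $w_2^2=0$, $uv=vu-2huw_2$. Moreover $\mathcal D_h=ad^{-1}-\beta d^{-1}\gamma d^{-1}$ and $\hat{\mathcal D}=bc^{-1}-\alpha c^{-1}\delta c^{-1}$ commute with $w_1,w_2,u,v$.
   Context: Let $h$ be an odd (Grassmann) parameter with $h^2=0$; even elements commute with everything and odd elements anticommute with each other. $\mathcal A$ is the $\mathbb Z_2$-graded algebra generated by even invertible $a,d$ and odd $\beta,\gamma$ ($h$ commuting with $a,d$, anticommuting with $\beta,\gamma$) subject to $a\beta=\beta a$, $a\gamma=\gamma a+h a^2(1-\mathcal D_h^{-1})$, $d\beta=\beta d$, $d\gamma=\gamma d+h d^2(\mathcal D_h-1)$, $\beta^2=0$, $\gamma^2=h\gamma d(1-\mathcal D_h)$, $\beta\gamma=-\gamma\beta+h\beta d(1-\mathcal D_h)$, $ad=da+h\beta d(\mathcal D_h-1)$, with $\mathcal D_h=ad^{-1}-\beta d^{-1}\gamma d^{-1}$; $T=\begin{pmatrix}a&\beta\\ \gamma&d\end{pmatrix}$ and $T^{-1}=\begin{pmatrix}a^{-1}+a^{-1}\beta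 d^{-1}\gamma a^{-1}&-a^{-1}\beta d^{-1}\\ -d^{-1}\gamma a^{-1}& d^{-1}+d^{-1}\gamma a^{-1}\beta d^{-1}\end{pmatrix}$. The differential algebra $\Gamma$ is the $\mathbb Z_2$-graded algebra generated by $\mathcal A$ together with odd elements $\alpha=\mathsf da,\ \delta=\mathsf dd$ and even elements $b=\mathsf d\beta,\ c=\mathsf d\gamma$ ($c$ invertible; $h$ anticommutes with $\alpha,\delta$), where $\mathsf d$ is an odd map with $\mathsf d^2=0$, graded Leibniz rule and $\mathsf dh=-h\mathsf d$, subject to the relations $a\alpha=\alpha a+h(\alpha\beta-ba)$, $ab=ba-hb\beta$, $ac=ca+h(\alpha a-c\beta+\delta a)$, $a\delta=\delta a+h(ba+\delta\beta)$; $\beta\alpha=-\alpha\beta+hb\beta$, $\beta b=b\beta$, $\beta c=c\beta+h(\alpha+\delta)\beta$, $\beta\delta=-\delta\beta-hb\beta$; $\gamma\alpha=-\alpha\gamma+h(\alpha a+\alpha d+b\gamma)$, $\gamma b=b\gamma+hb(a+d)$, $\gamma c=c\gamma+h(\alpha\gamma+ca+cd+\delta\gamma)$, $\gamma\delta=-\delta\gamma+h(\delta a+\delta d-b\gamma)$; $d\alpha=\alpha d-h(\alpha\beta+bd)$, $db=bd+hb\beta$, $dc=cd+h(\alpha d+c\beta+\delta d)$, $d\delta=\delta d+h(bd-\delta\beta)$; and $\alpha b=b\alpha+hb^2$, $\alpha c=c\alpha+h(cb+\delta\alpha)$, $\delta b=b\delta-hb^2$, $\delta c=c\delta-h(cb-\alpha\delta)$,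 $\alpha^2=h\alpha b$, $\alpha\delta=-\delta\alpha+h(\delta-\alpha)b$, $\delta^2=-h\delta b$, $bc=cb+h(\delta+\alpha)b$. *)

theory Defs
  imports Complex_Main
begin

end

theory Submission
  imports Defs
begin

lemma Bp: fixes x y Q z :: "'r::ring" assumes "y * x = x * y + Q" shows "y * (x * z) = x * (y * z) + Q * z"
  by (metis assms distrib_right mult.assoc)
lemma Bm: fixes x y Q z :: "'r::ring" assumes "y * x = - (x * y) + Q" shows "y * (x * z) = - (x * (y * z)) + Q * z"
  by (metis assms distrib_right mult.assoc mult_minus_left)
lemma Bs: fixes y Q z :: "'r::ring" assumes "y * y = Q" shows "y * (y * z) = Q * z"
  by (metis assms mult.assoc)
lemma P1: fixes x xi y :: "'r::ring"
  assumes r: "\<And>z. x * (y * z) = y * (x * z) + K z" and i1: "\<And>z. x * (xi * z) = z" and i2: "\<And>z. xi * (x * z) = z"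
  shows "xi * (y * z) = y * (xi * z) + - (xi * K (xi * z))"
proof -
  have "x * (y * (xi * z)) = y * z + K (xi * z)" using r[of "xi * z"] i1 by simp
  hence "xi * (x * (y * (xi * z))) = xi * (y * z + K (xi * z))" by simp
  hence "y * (xi * z) = xi * (y * z) + xi * K (xi * z)" by (simp add: i2 distrib_left)
  thus ?thesis by simp
qed
lemma P2: fixes x y yi :: "'r::ring"
  assumes r: "\<And>z. x * (y * z) = y * (x * z) + K z" and i1: "\<And>z. y * (yi * z) = z" and i2: "\<And>z. yi * (y * z) = z"
  shows "x * (yi * z) = yi * (x * z) + - (yi * K (yi * z))"
proof -
  have "x * z = y * (x * (yi * z)) + K (yi * z)" using r[of "yi * z"] i1 by simp
  hence "yi * (x * z) = yi * (y * (x * (yi * z)) + K (yi * z))" by simp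
  hence "yi * (x * z) = x * (yi * z) + yi * K (yi * z)" by (simp add: i2 distrib_left)
  thus ?thesis by simp
qed
lemma inv_comm: fixes x y yi :: "'r::ring_1" assumes "x * y = y * x" "y * yi = 1" "yi * y = 1" shows "yi * x = x * yi"
proof -
  have "yi * x = yi * x * (y * yi)" using assms by simp
  also have "... = yi * (x * y) * yi" by (simp add: mult.assoc)
  also have "... = yi * (y * x) * yi" using assms by simp
  also have "... = x * yi" using assms by (simp add: mult.assoc[symmetric])
  finally show ?thesis .
qed

locale SA =
  fixes h a d \<beta> \<gamma> \<alpha> \<delta> b c ai di ci Dh Dhi A B C D w1 w2 u v Dhat :: "'r :: real_algebra_1"
  assumes inv_a: "a * ai = 1" "ai * a = 1"
      and inv_d: "d * di = 1" "di * d = 1"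
      and inv_c: "c * ci = 1" "ci * c = 1"
      and Dh_def: "Dh = a * di - \<beta> * di * \<gamma> * di"
      and inv_Dh: "Dh * Dhi = 1" "Dhi * Dh = 1"
      and h_rels: "h * h = 0" "h * a = a * h" "h * d = d * h" "h * b = b * h" "h * c = c * h"
                  "h * \<beta> = - (\<beta> * h)" "h * \<gamma> = - (\<gamma> * h)"
                  "h * \<alpha> = - (\<alpha> * h)" "h * \<delta> = - (\<delta> * h)"
      and A_rels:
        "a * \<beta> = \<beta> * a"
        "a * \<gamma> = \<gamma> * a + h * a^2 * (1 - Dhi)"
        "d * \<beta> = \<beta> * d"
        "d * \<gamma> = \<gamma> * d + h * d^2 * (Dh - 1)"
        "\<beta> * \<beta> = 0"
        "\<gamma> * \<gamma> = h * \<gamma> * d * (1 - Dh)"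
        "\<beta> * \<gamma> = - (\<gamma> * \<beta>) + h * \<beta> * d * (1 - Dh)"
        "a * d = d * a + h * \<beta> * d * (Dh - 1)"
      and rels_a:
        "a * \<alpha> = \<alpha> * a + h * (\<alpha> * \<beta> - b * a)"
        "a * b = b * a - h * b * \<beta>"
        "a * c = c * a + h * (\<alpha> * a - c * \<beta> + \<delta> * a)"
        "a * \<delta> = \<delta> * a + h * (b * a + \<delta> * \<beta>)"
      and rels_beta:
        "\<beta> * \<alpha> = - (\<alpha> * \<beta>) + h * b * \<beta>"
        "\<beta> * b = b * \<beta>"
        "\<beta> * c = c * \<beta> + h * (\<alpha> + \<delta>) * \<beta>"
        "\<beta> * \<delta> = - (\<delta> * \<beta>) - h * b * \<beta>"
      and rels_gamma:
        "\<gamma> * \<alpha> = - (\<alpha> * \<gamma>) + h * (\<alpha> * a + \<alpha> * d + b * \<gamma>)"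
        "\<gamma> * b = b * \<gamma> + h * b * (a + d)"
        "\<gamma> * c = c * \<gamma> + h * (\<alpha> * \<gamma> + c * a + c * d + \<delta> * \<gamma>)"
        "\<gamma> * \<delta> = - (\<delta> * \<gamma>) + h * (\<delta> * a + \<delta> * d - b * \<gamma>)"
      and rels_d:
        "d * \<alpha> = \<alpha> * d - h * (\<alpha> * \<beta> + b * d)"
        "d * b = b * d + h * b * \<beta>"
        "d * c = c * d + h * (\<alpha> * d + c * \<beta> + \<delta> * d)"
        "d * \<delta> = \<delta> * d + h * (b * d - \<delta> * \<beta>)"
      and rels_diff:
        "\<alpha> * b = b * \<alpha> + h * b^2"
        "\<alpha> * c = c * \<alpha> + h * (c * b + \<delta> * \<alpha>)"
        "\<delta> * b = b * \<delta> - h * b^2"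
        "\<delta> * c = c * \<delta> - h * (c * b - \<alpha> * \<delta>)"
        "\<alpha> * \<alpha> = h * \<alpha> * b"
        "\<alpha> * \<delta> = - (\<delta> * \<alpha>) + h * (\<delta> - \<alpha>) * b"
        "\<delta> * \<delta> = - (h * \<delta> * b)"
        "b * c = c * b + h * (\<delta> + \<alpha>) * b"
      and Tinv:
        "A = ai + ai * \<beta> * di * \<gamma> * ai"
        "B = - (ai * \<beta> * di)"
        "C = - (di * \<gamma> * ai)"
        "D = di + di * \<gamma> * ai * \<beta> * di"
      and Omega:
        "w1 = \<alpha> * A + b * C"
        "u = \<alpha> * B + b * D"
        "w2 = \<delta> * D + c * B"
        "v = c * A + \<delta> * C"
      and Dhat_def: "Dhat = b * ci - \<alpha> * ci * \<delta> * ci"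

begin

definition H where "H z = h * z"
lemma H_cong[cong]: "H z = H z" by (rule refl)

lemma BpH: assumes "y * x = x * y + h * R" shows "y * (x * z) = x * (y * z) + H (R * z)"
  using Bp[OF assms] by (simp add: H_def mult.assoc)
lemma BmH: assumes "y * x = - (x * y) + h * R" shows "y * (x * z) = - (x * (y * z)) + H (R * z)"
  using Bm[OF assms] by (simp add: H_def mult.assoc)
lemma BsH: assumes "y * y = h * R" shows "y * (y * z) = H (R * z)"
  using Bs[OF assms] by (simp add: H_def mult.assoc)

lemma a_inv_z: "a * (ai * z) = z" "ai * (a * z) = z"
  using inv_a by (simp_all add: mult.assoc[symmetric])
lemma d_inv_z: "d * (di * z) = z" "di * (d * z) = z"
  using inv_d by (simp_all add: mult.assoc[symmetric])
lemma c_inv_z: "c * (ci * z) = z" "ci * (c * z) = z"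
  using inv_c by (simp_all add: mult.assoc[symmetric])

lemma hh: "h * h = 0" "h * (h * z) = 0" "h * H z = 0" "H z * w = H (z * w)" "H 0 = 0"
  using h_rels by (simp_all add: mult.assoc[symmetric] H_def)
lemma hmv_a: "a * h = h * a" "a * (h * z) = h * (a * z)" "a * H z = H (a * z)"
  using h_rels by (simp_all add: mult.assoc[symmetric] H_def)

lemma hmv_d: "d * h = h * d" "d * (h * z) = h * (d * z)" "d * H z = H (d * z)"
  using h_rels by (simp_all add: mult.assoc[symmetric] H_def)

lemma hmv_c: "c * h = h * c" "c * (h * z) = h * (c * z)" "c * H z = H (c * z)"
  using h_rels by (simp_all add: mult.assoc[symmetric] H_def)

lemma hmv_b: "b * h = h * b" "b * (h * z) = h * (b * z)" "b * H z = H (b * z)"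
  using h_rels by (simp_all add: mult.assoc[symmetric] H_def)

lemma hmv_alpha: "\<alpha> * h = - (h * \<alpha>)" "\<alpha> * (h * z) = - (h * (\<alpha> * z))" "\<alpha> * H z = - H (\<alpha> * z)"
  using h_rels by (simp_all add: mult.assoc[symmetric] H_def)

lemma hmv_delta: "\<delta> * h = - (h * \<delta>)" "\<delta> * (h * z) = - (h * (\<delta> * z))" "\<delta> * H z = - H (\<delta> * z)"
  using h_rels by (simp_all add: mult.assoc[symmetric] H_def)

lemma hmv_gamma: "\<gamma> * h = - (h * \<gamma>)" "\<gamma> * (h * z) = - (h * (\<gamma> * z))" "\<gamma> * H z = - H (\<gamma> * z)"
  using h_rels by (simp_all add: mult.assoc[symmetric] H_def)

lemma hmv_beta: "\<beta> * h = - (h * \<beta>)" "\<beta> * (h * z) = - (h * (\<beta> * z))" "\<beta> * H z = - H (\<beta> * z)"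
  using h_rels by (simp_all add: mult.assoc[symmetric] H_def)

lemma hai: "ai * h = h * ai" using inv_comm[OF h_rels(2) inv_a] .
lemma hdi: "di * h = h * di" using inv_comm[OF h_rels(3) inv_d] .
lemma hci: "ci * h = h * ci" using inv_comm[OF h_rels(5) inv_c] .
lemma hmv_ai: "ai * h = h * ai" "ai * (h * z) = h * (ai * z)" "ai * H z = H (ai * z)"
  using hai by (simp_all add: mult.assoc[symmetric] H_def)
lemma hmv_di: "di * h = h * di" "di * (h * z) = h * (di * z)" "di * H z = H (di * z)"
  using hdi by (simp_all add: mult.assoc[symmetric] H_def)
lemma hmv_ci: "ci * h = h * ci" "ci * (h * z) = h * (ci * z)" "ci * H z = H (ci * z)"
  using hci by (simp_all add: mult.assoc[symmetric] H_def)

lemmas hmv = hh hmv_a hmv_d hmv_b hmv_c hmv_ai hmv_di hmv_ci hmv_alpha hmv_delta hmv_gamma hmv_beta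
lemmas invz = a_inv_z d_inv_z c_inv_z inv_a inv_d inv_c

lemma r_a_be00: "a * \<beta> = \<beta> * a + h * (0)"
  using A_rels(1) by (simp add: algebra_simps)

lemmas r_a_be = BpH[OF r_a_be00]

lemmas r_a_be0 = r_a_be[where z=1, simplified mult_1_right]

lemma r_a_g00: "a * \<gamma> = \<gamma> * a + h * (a^2 * (1 - Dhi))"
  using A_rels(2) by (simp add: algebra_simps)

lemmas r_a_g = BpH[OF r_a_g00]

lemmas r_a_g0 = r_a_g[where z=1, simplified mult_1_right]

lemma r_d_be00: "d * \<beta> = \<beta> * d + h * (0)"
  using A_rels(3) by (simp add: algebra_simps)

lemmas r_d_be = BpH[OF r_d_be00]

lemmas r_d_be0 = r_d_be[where z=1, simplified mult_1_right]

lemma r_d_g00: "d * \<gamma> = \<gamma> * d + h * (d^2 * (Dh - 1))"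
  using A_rels(4) by (simp add: algebra_simps)

lemmas r_d_g = BpH[OF r_d_g00]

lemmas r_d_g0 = r_d_g[where z=1, simplified mult_1_right]

lemma r_be_be00: "\<beta> * \<beta> = h * (0)"
  using A_rels(5) by (simp add: algebra_simps)

lemmas r_be_be = BsH[OF r_be_be00]

lemmas r_be_be0 = r_be_be[where z=1, simplified mult_1_right]

lemma r_g_g00: "\<gamma> * \<gamma> = h * (\<gamma> * d * (1 - Dh))"
  using A_rels(6) by (simp add: algebra_simps)

lemmas r_g_g = BsH[OF r_g_g00]

lemmas r_g_g0 = r_g_g[where z=1, simplified mult_1_right]

lemma r_be_g00: "\<beta> * \<gamma> = - (\<gamma> * \<beta>) + h * (\<beta> * d * (1 - Dh))"
  using A_rels(7) by (simp add: algebra_simps)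

lemmas r_be_g = BmH[OF r_be_g00]

lemmas r_be_g0 = r_be_g[where z=1, simplified mult_1_right]

lemma r_a_d00: "a * d = d * a + h * (\<beta> * d * (Dh - 1))"
  using A_rels(8) by (simp add: algebra_simps)

lemmas r_a_d = BpH[OF r_a_d00]

lemmas r_a_d0 = r_a_d[where z=1, simplified mult_1_right]

lemma r_a_al00: "a * \<alpha> = \<alpha> * a + h * (\<alpha> * \<beta> - b * a)"
  using rels_a(1) by (simp add: algebra_simps)

lemmas r_a_al = BpH[OF r_a_al00]

lemmas r_a_al0 = r_a_al[where z=1, simplified mult_1_right]

lemma r_a_b00: "a * b = b * a + h * (- (b * \<beta>))"
  using rels_a(2) by (simp add: algebra_simps)

lemmas r_a_b = BpH[OF r_a_b00]

lemmas r_a_b0 = r_a_b[where z=1, simplified mult_1_right]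

lemma r_a_c00: "a * c = c * a + h * (\<alpha> * a - c * \<beta> + \<delta> * a)"
  using rels_a(3) by (simp add: algebra_simps)

lemmas r_a_c = BpH[OF r_a_c00]

lemmas r_a_c0 = r_a_c[where z=1, simplified mult_1_right]

lemma r_a_dl00: "a * \<delta> = \<delta> * a + h * (b * a + \<delta> * \<beta>)"
  using rels_a(4) by (simp add: algebra_simps)

lemmas r_a_dl = BpH[OF r_a_dl00]

lemmas r_a_dl0 = r_a_dl[where z=1, simplified mult_1_right]

lemma r_be_al00: "\<beta> * \<alpha> = - (\<alpha> * \<beta>) + h * (b * \<beta>)"
  using rels_beta(1) by (simp add: algebra_simps)

lemmas r_be_al = BmH[OF r_be_al00]

lemmas r_be_al0 = r_be_al[where z=1, simplified mult_1_right]

lemma r_be_b00: "\<beta> * b = b * \<beta> + h * (0)"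
  using rels_beta(2) by (simp add: algebra_simps)

lemmas r_be_b = BpH[OF r_be_b00]

lemmas r_be_b0 = r_be_b[where z=1, simplified mult_1_right]

lemma r_be_c00: "\<beta> * c = c * \<beta> + h * ((\<alpha> + \<delta>) * \<beta>)"
  using rels_beta(3) by (simp add: algebra_simps)

lemmas r_be_c = BpH[OF r_be_c00]

lemmas r_be_c0 = r_be_c[where z=1, simplified mult_1_right]

lemma r_be_dl00: "\<beta> * \<delta> = - (\<delta> * \<beta>) + h * (- (b * \<beta>))"
  using rels_beta(4) by (simp add: algebra_simps)

lemmas r_be_dl = BmH[OF r_be_dl00]

lemmas r_be_dl0 = r_be_dl[where z=1, simplified mult_1_right]

lemma r_g_al00: "\<gamma> * \<alpha> = - (\<alpha> * \<gamma>) + h * (\<alpha> * a + \<alpha> * d + b * \<gamma>)"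
  using rels_gamma(1) by (simp add: algebra_simps)

lemmas r_g_al = BmH[OF r_g_al00]

lemmas r_g_al0 = r_g_al[where z=1, simplified mult_1_right]

lemma r_g_b00: "\<gamma> * b = b * \<gamma> + h * (b * (a + d))"
  using rels_gamma(2) by (simp add: algebra_simps)

lemmas r_g_b = BpH[OF r_g_b00]

lemmas r_g_b0 = r_g_b[where z=1, simplified mult_1_right]

lemma r_g_c00: "\<gamma> * c = c * \<gamma> + h * (\<alpha> * \<gamma> + c * a + c * d + \<delta> * \<gamma>)"
  using rels_gamma(3) by (simp add: algebra_simps)

lemmas r_g_c = BpH[OF r_g_c00]

lemmas r_g_c0 = r_g_c[where z=1, simplified mult_1_right]

lemma r_g_dl00: "\<gamma> * \<delta> = - (\<delta> * \<gamma>) + h * (\<delta> * a + \<delta> * d - b * \<gamma>)"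
  using rels_gamma(4) by (simp add: algebra_simps)

lemmas r_g_dl = BmH[OF r_g_dl00]

lemmas r_g_dl0 = r_g_dl[where z=1, simplified mult_1_right]

lemma r_d_al00: "d * \<alpha> = \<alpha> * d + h * (- (\<alpha> * \<beta> + b * d))"
  using rels_d(1) by (simp add: algebra_simps)

lemmas r_d_al = BpH[OF r_d_al00]

lemmas r_d_al0 = r_d_al[where z=1, simplified mult_1_right]

lemma r_d_b00: "d * b = b * d + h * (b * \<beta>)"
  using rels_d(2) by (simp add: algebra_simps)

lemmas r_d_b = BpH[OF r_d_b00]

lemmas r_d_b0 = r_d_b[where z=1, simplified mult_1_right]

lemma r_d_c00: "d * c = c * d + h * (\<alpha> * d + c * \<beta> + \<delta> * d)"
  using rels_d(3) by (simp add: algebra_simps)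

lemmas r_d_c = BpH[OF r_d_c00]

lemmas r_d_c0 = r_d_c[where z=1, simplified mult_1_right]

lemma r_d_dl00: "d * \<delta> = \<delta> * d + h * (b * d - \<delta> * \<beta>)"
  using rels_d(4) by (simp add: algebra_simps)

lemmas r_d_dl = BpH[OF r_d_dl00]

lemmas r_d_dl0 = r_d_dl[where z=1, simplified mult_1_right]

lemma r_al_b00: "\<alpha> * b = b * \<alpha> + h * (b^2)"
  using rels_diff(1) by (simp add: algebra_simps)

lemmas r_al_b = BpH[OF r_al_b00]

lemmas r_al_b0 = r_al_b[where z=1, simplified mult_1_right]

lemma r_al_c00: "\<alpha> * c = c * \<alpha> + h * (c * b + \<delta> * \<alpha>)"
  using rels_diff(2) by (simp add: algebra_simps)

lemmas r_al_c = BpH[OF r_al_c00]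

lemmas r_al_c0 = r_al_c[where z=1, simplified mult_1_right]

lemma r_dl_b00: "\<delta> * b = b * \<delta> + h * (- (b^2))"
  using rels_diff(3) by (simp add: algebra_simps)

lemmas r_dl_b = BpH[OF r_dl_b00]

lemmas r_dl_b0 = r_dl_b[where z=1, simplified mult_1_right]

lemma r_dl_c00: "\<delta> * c = c * \<delta> + h * (- (c * b - \<alpha> * \<delta>))"
  using rels_diff(4) by (simp add: algebra_simps)

lemmas r_dl_c = BpH[OF r_dl_c00]

lemmas r_dl_c0 = r_dl_c[where z=1, simplified mult_1_right]

lemma r_al_al00: "\<alpha> * \<alpha> = h * (\<alpha> * b)"
  using rels_diff(5) by (simp add: algebra_simps)

lemmas r_al_al = BsH[OF r_al_al00]

lemmas r_al_al0 = r_al_al[where z=1, simplified mult_1_right]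

lemma r_al_dl00: "\<alpha> * \<delta> = - (\<delta> * \<alpha>) + h * ((\<delta> - \<alpha>) * b)"
  using rels_diff(6) by (simp add: algebra_simps)

lemmas r_al_dl = BmH[OF r_al_dl00]

lemmas r_al_dl0 = r_al_dl[where z=1, simplified mult_1_right]

lemma r_dl_dl00: "\<delta> * \<delta> = h * (- (\<delta> * b))"
  using rels_diff(7) by (simp add: algebra_simps)

lemmas r_dl_dl = BsH[OF r_dl_dl00]

lemmas r_dl_dl0 = r_dl_dl[where z=1, simplified mult_1_right]

lemma r_b_c00: "b * c = c * b + h * ((\<delta> + \<alpha>) * b)"
  using rels_diff(8) by (simp add: algebra_simps)

lemmas r_b_c = BpH[OF r_b_c00]

lemmas r_b_c0 = r_b_c[where z=1, simplified mult_1_right]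

lemmas r_a_di = P2[OF r_a_d d_inv_z(1) d_inv_z(2)]

lemmas r_a_di0 = r_a_di[where z=1, simplified mult_1_right]

lemmas r_b_ci = P2[OF r_b_c c_inv_z(1) c_inv_z(2)]

lemmas r_b_ci0 = r_b_ci[where z=1, simplified mult_1_right]

lemmas r_dl_ci = P2[OF r_dl_c c_inv_z(1) c_inv_z(2)]

lemmas r_dl_ci0 = r_dl_ci[where z=1, simplified mult_1_right]

lemmas r_al_ci = P2[OF r_al_c c_inv_z(1) c_inv_z(2)]

lemmas r_al_ci0 = r_al_ci[where z=1, simplified mult_1_right]

lemmas r_g_ci = P2[OF r_g_c c_inv_z(1) c_inv_z(2)]

lemmas r_g_ci0 = r_g_ci[where z=1, simplified mult_1_right]

lemmas r_be_ci = P2[OF r_be_c c_inv_z(1) c_inv_z(2)]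

lemmas r_be_ci0 = r_be_ci[where z=1, simplified mult_1_right]

lemmas r_d_ci = P2[OF r_d_c c_inv_z(1) c_inv_z(2)]

lemmas r_d_ci0 = r_d_ci[where z=1, simplified mult_1_right]

lemmas r_a_ci = P2[OF r_a_c c_inv_z(1) c_inv_z(2)]

lemmas r_a_ci0 = r_a_ci[where z=1, simplified mult_1_right]

lemmas r_di_c = P1[OF r_d_c d_inv_z(1) d_inv_z(2)]

lemmas r_di_c0 = r_di_c[where z=1, simplified mult_1_right]

lemmas r_di_b = P1[OF r_d_b d_inv_z(1) d_inv_z(2)]

lemmas r_di_b0 = r_di_b[where z=1, simplified mult_1_right]

lemmas r_di_dl = P1[OF r_d_dl d_inv_z(1) d_inv_z(2)]

lemmas r_di_dl0 = r_di_dl[where z=1, simplified mult_1_right]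

lemmas r_di_al = P1[OF r_d_al d_inv_z(1) d_inv_z(2)]

lemmas r_di_al0 = r_di_al[where z=1, simplified mult_1_right]

lemmas r_di_g = P1[OF r_d_g d_inv_z(1) d_inv_z(2)]

lemmas r_di_g0 = r_di_g[where z=1, simplified mult_1_right]

lemmas r_di_be = P1[OF r_d_be d_inv_z(1) d_inv_z(2)]

lemmas r_di_be0 = r_di_be[where z=1, simplified mult_1_right]

lemmas r_di_ci = P1[OF r_d_ci d_inv_z(1) d_inv_z(2)]

lemmas r_di_ci0 = r_di_ci[where z=1, simplified mult_1_right]

lemmas r_ai_c = P1[OF r_a_c a_inv_z(1) a_inv_z(2)]

lemmas r_ai_c0 = r_ai_c[where z=1, simplified mult_1_right]

lemmas r_ai_b = P1[OF r_a_b a_inv_z(1) a_inv_z(2)]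

lemmas r_ai_b0 = r_ai_b[where z=1, simplified mult_1_right]

lemmas r_ai_dl = P1[OF r_a_dl a_inv_z(1) a_inv_z(2)]

lemmas r_ai_dl0 = r_ai_dl[where z=1, simplified mult_1_right]

lemmas r_ai_al = P1[OF r_a_al a_inv_z(1) a_inv_z(2)]

lemmas r_ai_al0 = r_ai_al[where z=1, simplified mult_1_right]

lemmas r_ai_be = P1[OF r_a_be a_inv_z(1) a_inv_z(2)]

lemmas r_ai_be0 = r_ai_be[where z=1, simplified mult_1_right]

lemmas r_ai_d = P1[OF r_a_d a_inv_z(1) a_inv_z(2)]

lemmas r_ai_d0 = r_ai_d[where z=1, simplified mult_1_right]

lemmas r_ai_di = P1[OF r_a_di a_inv_z(1) a_inv_z(2)]

lemmas r_ai_di0 = r_ai_di[where z=1, simplified mult_1_right]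

lemmas r_ai_ci = P1[OF r_a_ci a_inv_z(1) a_inv_z(2)]

lemmas r_ai_ci0 = r_ai_ci[where z=1, simplified mult_1_right]

lemmas r_ai_g_raw = P1[OF r_a_g a_inv_z(1) a_inv_z(2)]

lemmas r_ai_g_raw0 = r_ai_g_raw[where z=1, simplified mult_1_right]


lemmas rules1 = r_a_be0 r_a_be r_d_be0 r_d_be r_d_g0 r_d_g r_be_be0 r_be_be r_g_g0 r_g_g r_be_g0 r_be_g r_a_d0 r_a_d r_a_al0 r_a_al r_a_b0 r_a_b r_a_c0 r_a_c r_a_dl0 r_a_dl r_be_al0 r_be_al r_be_b0 r_be_b r_be_c0 r_be_c r_be_dl0 r_be_dl r_g_al0 r_g_al r_g_b0 r_g_b r_g_c0 r_g_c r_g_dl0 r_g_dl r_d_al0 r_d_al r_d_b0 r_d_b r_d_c0 r_d_c r_d_dl0 r_d_dl r_al_b0 r_al_b r_al_c0 r_al_c r_dl_b0 r_dl_b r_dl_c0 r_dl_c r_al_al0 r_al_al r_al_dl0 r_al_dl r_dl_dl0 r_dl_dl r_b_c0 r_b_c r_a_di r_a_di0 r_b_ci r_b_ci0 r_dl_ci r_dl_ci0 r_al_ci r_al_ci0 r_g_ci r_g_ci0 r_be_ci r_be_ci0 r_d_ci r_d_ci0 r_a_ci r_a_ci0 r_di_c r_di_c0 r_di_b r_di_b0 r_di_dl r_di_dl0 r_di_al r_di_al0 r_di_g r_di_g0 r_di_be r_di_be0 r_di_ci r_di_ci0 r_ai_c r_ai_c0 r_ai_b r_ai_b0 r_ai_dl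 r_ai_dl0 r_ai_al r_ai_al0 r_ai_be r_ai_be0 r_ai_d r_ai_d0 r_ai_di r_ai_di0 r_ai_ci r_ai_ci0

lemmas ringn = mult.assoc distrib_left distrib_right mult_minus_left mult_minus_right
  left_diff_distrib right_diff_distrib power2_eq_square mult_2

lemma hE: "h * ((d * ai - \<gamma> * \<beta> * ai * ai) * Dh) = h"
  unfolding Dh_def by (simp add: ringn rules1 r_a_g r_a_g0 r_ai_g_raw r_ai_g_raw0 hmv invz)

lemma hDhi: "h * Dhi = h * (d * ai - \<gamma> * \<beta> * ai * ai)"
proof -
  have "h * Dhi = h * ((d * ai - \<gamma> * \<beta> * ai * ai) * Dh) * Dhi" using hE by simp
  also have "... = h * (d * ai - \<gamma> * \<beta> * ai * ai)" using inv_Dh by (simp add: mult.assoc)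
  finally show ?thesis .
qed

lemma ha2: "h * (a^2 * X) = a^2 * (h * X)" by (metis h_rels(2) mult.assoc power2_eq_square)

lemma r_a_g2_00: "a * \<gamma> = \<gamma> * a + h * (a^2 * (1 - (d * ai - \<gamma> * \<beta> * ai * ai)))"
proof -
  have "h * (a^2 * Dhi) = a^2 * (h * Dhi)" by (rule ha2)
  also have "... = a^2 * (h * (d * ai - \<gamma> * \<beta> * ai * ai))" by (simp add: hDhi)
  also have "... = h * (a^2 * (d * ai - \<gamma> * \<beta> * ai * ai))" by (rule ha2[symmetric])
  finally have k: "h * (a^2 * Dhi) = h * (a^2 * (d * ai - \<gamma> * \<beta> * ai * ai))" .
  show ?thesis using r_a_g00 k by (simp add: right_diff_distrib)
qed
lemmas r_a_g2 = BpH[OF r_a_g2_00]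
lemmas r_a_g20 = r_a_g2[where z=1, simplified mult_1_right]
lemmas r_ai_g2 = P1[OF r_a_g2 a_inv_z(1) a_inv_z(2)]
lemmas r_ai_g20 = r_ai_g2[where z=1, simplified mult_1_right]

lemmas rules = rules1 r_a_g2 r_a_g20 r_ai_g2 r_ai_g20

lemma g0: "w1 * u = u * w1 - 2 * h * u^2"
  unfolding Omega Tinv Dhat_def Dh_def eq_iff_diff_eq_0[of "w1 * u"]
  apply (simp add: ringn rules hmv invz)
  apply (unfold H_def)
  apply (simp add: ringn rules hmv invz Dh_def)
  done

lemma g1: "w2 * u = u * w2"
  unfolding Omega Tinv Dhat_def Dh_def eq_iff_diff_eq_0[of "w2 * u"]
  apply (simp add: ringn rules hmv invz)
  apply (unfold H_def)
  apply (simp add: ringn rules hmv invz Dh_def)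
  done

lemma g2: "w1 * v = v * w1 + 2 * h * (w1 * w2 - u * v)"
  unfolding Omega Tinv Dhat_def Dh_def eq_iff_diff_eq_0[of "w1 * v"]
  apply (simp add: ringn rules hmv invz)
  apply (unfold H_def)
  apply (simp add: ringn rules hmv invz Dh_def)
  done

lemma g3: "w2 * v = v * w2"
  unfolding Omega Tinv Dhat_def Dh_def eq_iff_diff_eq_0[of "w2 * v"]
  apply (simp add: ringn rules hmv invz)
  apply (unfold H_def)
  apply (simp add: ringn rules hmv invz Dh_def)
  done

lemma g4: "w1 * w2 = - (w2 * w1) - 2 * h * u * w2"
  unfolding Omega Tinv Dhat_def Dh_def eq_iff_diff_eq_0[of "w1 * w2"]
  apply (simp add: ringn rules hmv invz)
  apply (unfold H_def)
  apply (simp add: ringn rules hmv invz Dh_def)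
  done

lemma g5: "w1 * w1 = - (2 * h * u * w1)"
  unfolding Omega Tinv Dhat_def Dh_def eq_iff_diff_eq_0[of "w1 * w1"]
  apply (simp add: ringn rules hmv invz)
  apply (unfold H_def)
  apply (simp add: ringn rules hmv invz Dh_def)
  done

lemma g6: "w2 * w2 = 0"
  unfolding Omega Tinv Dhat_def Dh_def eq_iff_diff_eq_0[of "w2 * w2"]
  apply (simp add: ringn rules hmv invz)
  apply (unfold H_def)
  apply (simp add: ringn rules hmv invz Dh_def)
  done

lemma g7: "u * v = v * u - 2 * h * u * w2"
  unfolding Omega Tinv Dhat_def Dh_def eq_iff_diff_eq_0[of "u * v"]
  apply (simp add: ringn rules hmv invz)
  apply (unfold H_def)
  apply (simp add: ringn rules hmv invz Dh_def)
  done

lemma g8: "Dh * w1 = w1 * Dh"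
  unfolding Omega Tinv Dhat_def Dh_def eq_iff_diff_eq_0[of "Dh * w1"]
  apply (simp add: ringn rules hmv invz)
  apply (unfold H_def)
  apply (simp add: ringn rules hmv invz Dh_def)
  done

lemma g9: "Dhat * w1 = w1 * Dhat"
  unfolding Omega Tinv Dhat_def Dh_def eq_iff_diff_eq_0[of "Dhat * w1"]
  apply (simp add: ringn rules hmv invz)
  apply (unfold H_def)
  apply (simp add: ringn rules hmv invz Dh_def)
  done

lemma g10: "Dh * w2 = w2 * Dh"
  unfolding Omega Tinv Dhat_def Dh_def eq_iff_diff_eq_0[of "Dh * w2"]
  apply (simp add: ringn rules hmv invz)
  apply (unfold H_def)
  apply (simp add: ringn rules hmv invz Dh_def)
  done

lemma g11: "Dhat * w2 = w2 * Dhat"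
  unfolding Omega Tinv Dhat_def Dh_def eq_iff_diff_eq_0[of "Dhat * w2"]
  apply (simp add: ringn rules hmv invz)
  apply (unfold H_def)
  apply (simp add: ringn rules hmv invz Dh_def)
  done

lemma g12: "Dh * u = u * Dh"
  unfolding Omega Tinv Dhat_def Dh_def eq_iff_diff_eq_0[of "Dh * u"]
  apply (simp add: ringn rules hmv invz)
  apply (unfold H_def)
  apply (simp add: ringn rules hmv invz Dh_def)
  done

lemma g13: "Dhat * u = u * Dhat"
  unfolding Omega Tinv Dhat_def Dh_def eq_iff_diff_eq_0[of "Dhat * u"]
  apply (simp add: ringn rules hmv invz)
  apply (unfold H_def)
  apply (simp add: ringn rules hmv invz Dh_def)
  done

lemma g14: "Dh * v = v * Dh"
  unfolding Omega Tinv Dhat_def Dh_def eq_iff_diff_eq_0[of "Dh * v"]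
  apply (simp add: ringn rules hmv invz)
  apply (unfold H_def)
  apply (simp add: ringn rules hmv invz Dh_def)
  done

lemma g15: "Dhat * v = v * Dhat"
  unfolding Omega Tinv Dhat_def Dh_def eq_iff_diff_eq_0[of "Dhat * v"]
  apply (simp add: ringn rules hmv invz)
  apply (unfold H_def)
  apply (simp add: ringn rules hmv invz Dh_def)
  done

lemma main_conj:
  shows "w1 * u = u * w1 - 2 * h * u^2
       \<and> w2 * u = u * w2
       \<and> w1 * v = v * w1 + 2 * h * (w1 * w2 - u * v)
       \<and> w2 * v = v * w2
       \<and> w1 * w2 = - (w2 * w1) - 2 * h * u * w2
       \<and> w1 * w1 = - (2 * h * u * w1)
       \<and> w2 * w2 = 0
       \<and> u * v = v * u - 2 * h * u * w2
       \<and> Dh * w1 = w1 * Dh \<and> Dh * w2 = w2 * Dh \<and> Dh * u = u * Dh \<and> Dh * v = v * Dh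
       \<and> Dhat * w1 = w1 * Dhat \<and> Dhat * w2 = w2 * Dhat
       \<and> Dhat * u = u * Dhat \<and> Dhat * v = v * Dhat"
  using g0 g1 g2 g3 g4 g5 g6 g7 g8 g9 g10 g11 g12 g13 g14 g15 by blast

end

theorem mainTheorem9:
  fixes h a d \<beta> \<gamma> \<alpha> \<delta> b c ai di ci Dh Dhi A B C D w1 w2 u v Dhat :: "'r :: real_algebra_1"
  assumes inv_a: "a * ai = 1" "ai * a = 1"
      and inv_d: "d * di = 1" "di * d = 1"
      and inv_c: "c * ci = 1" "ci * c = 1"
      and Dh_def: "Dh = a * di - \<beta> * di * \<gamma> * di"
      and inv_Dh: "Dh * Dhi = 1" "Dhi * Dh = 1"
      and h_rels: "h * h = 0" "h * a = a * h" "h * d = d * h" "h * b = b * h" "h * c = c * h"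
                  "h * \<beta> = - (\<beta> * h)" "h * \<gamma> = - (\<gamma> * h)"
                  "h * \<alpha> = - (\<alpha> * h)" "h * \<delta> = - (\<delta> * h)"
      and A_rels:
        "a * \<beta> = \<beta> * a"
        "a * \<gamma> = \<gamma> * a + h * a^2 * (1 - Dhi)"
        "d * \<beta> = \<beta> * d"
        "d * \<gamma> = \<gamma> * d + h * d^2 * (Dh - 1)"
        "\<beta> * \<beta> = 0"
        "\<gamma> * \<gamma> = h * \<gamma> * d * (1 - Dh)"
        "\<beta> * \<gamma> = - (\<gamma> * \<beta>) + h * \<beta> * d * (1 - Dh)"
        "a * d = d * a + h * \<beta> * d * (Dh - 1)"
      and rels_a:
        "a * \<alpha> = \<alpha> * a + h * (\<alpha> * \<beta> - b * a)"
        "a * b = b * a - h * b * \<beta>"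
        "a * c = c * a + h * (\<alpha> * a - c * \<beta> + \<delta> * a)"
        "a * \<delta> = \<delta> * a + h * (b * a + \<delta> * \<beta>)"
      and rels_beta:
        "\<beta> * \<alpha> = - (\<alpha> * \<beta>) + h * b * \<beta>"
        "\<beta> * b = b * \<beta>"
        "\<beta> * c = c * \<beta> + h * (\<alpha> + \<delta>) * \<beta>"
        "\<beta> * \<delta> = - (\<delta> * \<beta>) - h * b * \<beta>"
      and rels_gamma:
        "\<gamma> * \<alpha> = - (\<alpha> * \<gamma>) + h * (\<alpha> * a + \<alpha> * d + b * \<gamma>)"
        "\<gamma> * b = b * \<gamma> + h * b * (a + d)"
        "\<gamma> * c = c * \<gamma> + h * (\<alpha> * \<gamma> + c * a + c * d + \<delta> * \<gamma>)"
        "\<gamma> * \<delta> = - (\<delta> * \<gamma>) + h * (\<delta> * a + \<delta> * d - b * \<gamma>)"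
      and rels_d:
        "d * \<alpha> = \<alpha> * d - h * (\<alpha> * \<beta> + b * d)"
        "d * b = b * d + h * b * \<beta>"
        "d * c = c * d + h * (\<alpha> * d + c * \<beta> + \<delta> * d)"
        "d * \<delta> = \<delta> * d + h * (b * d - \<delta> * \<beta>)"
      and rels_diff:
        "\<alpha> * b = b * \<alpha> + h * b^2"
        "\<alpha> * c = c * \<alpha> + h * (c * b + \<delta> * \<alpha>)"
        "\<delta> * b = b * \<delta> - h * b^2"
        "\<delta> * c = c * \<delta> - h * (c * b - \<alpha> * \<delta>)"
        "\<alpha> * \<alpha> = h * \<alpha> * b"
        "\<alpha> * \<delta> = - (\<delta> * \<alpha>) + h * (\<delta> - \<alpha>) * b"
        "\<delta> * \<delta> = - (h * \<delta> * b)"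
        "b * c = c * b + h * (\<delta> + \<alpha>) * b"
      and Tinv:
        "A = ai + ai * \<beta> * di * \<gamma> * ai"
        "B = - (ai * \<beta> * di)"
        "C = - (di * \<gamma> * ai)"
        "D = di + di * \<gamma> * ai * \<beta> * di"
      and Omega:
        "w1 = \<alpha> * A + b * C"
        "u = \<alpha> * B + b * D"
        "w2 = \<delta> * D + c * B"
        "v = c * A + \<delta> * C"
      and Dhat_def: "Dhat = b * ci - \<alpha> * ci * \<delta> * ci"
  shows "w1 * u = u * w1 - 2 * h * u^2
       \<and> w2 * u = u * w2
       \<and> w1 * v = v * w1 + 2 * h * (w1 * w2 - u * v)
       \<and> w2 * v = v * w2
       \<and> w1 * w2 = - (w2 * w1) - 2 * h * u * w2
       \<and> w1 * w1 = - (2 * h * u * w1)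
       \<and> w2 * w2 = 0
       \<and> u * v = v * u - 2 * h * u * w2
       \<and> Dh * w1 = w1 * Dh \<and> Dh * w2 = w2 * Dh \<and> Dh * u = u * Dh \<and> Dh * v = v * Dh
       \<and> Dhat * w1 = w1 * Dhat \<and> Dhat * w2 = w2 * Dhat
       \<and> Dhat * u = u * Dhat \<and> Dhat * v = v * Dhat"
proof -
  have "SA h a d \<beta> \<gamma> \<alpha> \<delta> b c ai di ci Dh Dhi A B C D w1 w2 u v Dhat"
    by (intro SA.intro) (fact assms)+
  then show ?thesis by (rule SA.main_conj)
qed

end
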